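(* Let $f:\mathbb{R}^n\to\mathbb{R}$ be bounded below by $f_{\mathrm{low}}$ and twice continuously differentiable with $\nabla^2 f$ Lipschitz continuous with constant $L_{\nabla^2 f}$. Run the algorithm described in the context, and suppose that (i) at every iteration $k$ the model $m_k$ is fully quadratic in $B(x_k,\Delta_k)$ with constants $\kappa_{\mathrm{mf}},\kappa_{\mathrm{mg}},\kappa_{\mathrm{mh}}>0$ independent of $k$, and $\|H_k\|\le\kappa_H-1$ for some $\kappa_H\ge1$ independent of $k$; (ii) at every iteration the step satisfies $\|s_k\|\le\Delta_k$ and $$m_k(x_k)-m_k(x_k+s_k)\ge\kappa_s\max\left(\|g_k\|\min\left(\Delta_k,\frac{\|g_k\|}{\|H_k\|+1}\right),\ \tau^m_k\Delta_k^2\right)$$ for some $\kappa_s\in(0,\tfrac12)$. Let $\epsilon>0$. If $\sigma_k\ge\epsilon$ for all $k=0,\ldots,K-1$, then $$K\le\frac{\log(\Delta_0/\Delta_{\min}(\epsilon))}{\log(\gamma_{\mathrm{dec}}^{-1})}+\left(1+\frac{\log(\gamma_{\mathrm{inc}})}{\log(\gamma_{\mathrm{dec}}^{-1})}\right)\frac{(1+\kappa_\sigma\mu_c^{-1})[f(x_0)-f_{\mathrm{low}}]}{\eta_U\kappa_s\min(\epsilon\Delta_{\min}(\epsilon),\epsilon\Delta_{\min}(\epsilon)^2)},$$ where $\kappa_\sigma:=\max(\kappa_{\mathrm{mg}}\Delta_{\max},\kappa_{\mathrm{mh}})$ and $$\Delta_{\min}(\epsilon):=\min\left(\Delta_0,\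 \frac{\gamma_{\mathrm{dec}}\epsilon}{\max\left(\frac{2\kappa_{\mathrm{mf}}\Delta_{\max}}{\kappa_s(1-\eta_S)},\kappa_H,\mu_c\right)+\kappa_\sigma},\ \frac{\gamma_{\mathrm{dec}}\epsilon}{\max\left(\frac{2\kappa_{\mathrm{mf}}}{\kappa_s(1-\eta_S)},\mu_c\right)+\kappa_\sigma},\ \frac{\epsilon}{(1+\kappa_\sigma\mu_c^{-1})\kappa_H}\right).$$
   Context: Norms are Euclidean (operator 2-norm for matrices); $B(x,\Delta)=\{y:\|y-x\|\le\Delta\}$. A model $m$ is fully quadratic in $B(x,\Delta)$ with constants $\kappa_{\mathrm{mf}},\kappa_{\mathrm{mg}},\kappa_{\mathrm{mh}}>0$ if for all $y\in B(x,\Delta)$: $|m(y)-f(y)|\le\kappa_{\mathrm{mf}}\Delta^3$, $\|\nabla m(y)-\nabla f(y)\|\le\kappa_{\mathrm{mg}}\Delta^2$, $\|\nabla^2 m(y)-\nabla^2 f(y)\|\le\kappa_{\mathrm{mh}}\Delta$. Notation: $\tau_k:=\max(-\lambda_{\min}(\nabla^2 f(x_k)),0)$, $\sigma_k:=\max(\|\nabla f(x_k)\|,\tau_k)$, $\tau^m_k:=\max(-\lambda_{\min}(H_k),0)$, $\sigma^m_k:=\max(\|g_k\|,\tau^m_k)$. Algorithm: inputs $x_0\in\mathbb{R}^n$, $\Delta_0>0$, parameters $\Delta_{\max}\ge\Delta_0$, $0<\gamma_{\mathrm{dec}}<1<\gamma_{\mathrm{inc}}$, $0<\eta_U\le\eta_S<1$,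 $\mu_c>0$. For $k=0,1,\ldots$: build a quadratic model $m_k(y)=c_k+g_k^T(y-x_k)+\tfrac12(y-x_k)^TH_k(y-x_k)$ ($H_k$ symmetric); compute a step $s_k$; evaluate $f(x_k+s_k)$ and $\rho_k=\frac{f(x_k)-f(x_k+s_k)}{m_k(x_k)-m_k(x_k+s_k)}$. If $\rho_k\ge\eta_S$ and $\sigma^m_k\ge\mu_c\Delta_k$: $x_{k+1}=x_k+s_k$, $\Delta_{k+1}=\min(\gamma_{\mathrm{inc}}\Delta_k,\Delta_{\max})$. Else if $\eta_U\le\rho_k<\eta_S$ and $\sigma^m_k\ge\mu_c\Delta_k$: $x_{k+1}=x_k+s_k$, $\Delta_{k+1}=\Delta_k$. Otherwise: $x_{k+1}=x_k$, $\Delta_{k+1}=\gamma_{\mathrm{dec}}\Delta_k$. *)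

theory Defs
  imports "HOL-Analysis.Analysis"
begin

definition opnorm :: "real^'n^'m \<Rightarrow> real" where
  "opnorm A = onorm (\<lambda>v. A *v v)"

definition lambda_min :: "real^'n^'n \<Rightarrow> real" where
  "lambda_min A = Min {lam. \<exists>v. v \<noteq> 0 \<and> A *v v = lam *\<^sub>R v}"

definition fully_quadratic ::
  "(real^'n \<Rightarrow> real) \<Rightarrow> (real^'n \<Rightarrow> real^'n) \<Rightarrow> (real^'n \<Rightarrow> real^'n^'n) \<Rightarrow>
   (real^'n \<Rightarrow> real) \<Rightarrow> (real^'n \<Rightarrow> real^'n) \<Rightarrow> (real^'n \<Rightarrow> real^'n^'n) \<Rightarrow>
   real^'n \<Rightarrow> real \<Rightarrow> real \<Rightarrow> real \<Rightarrow> real \<Rightarrow> bool" where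
  "fully_quadratic m gm hm f gf hf x Delta kmf kmg kmh \<longleftrightarrow>
     (\<forall>y \<in> cball x Delta.
        \<bar>m y - f y\<bar> \<le> kmf * Delta ^ 3 \<and>
        norm (gm y - gf y) \<le> kmg * Delta ^ 2 \<and>
        opnorm (hm y - hf y) \<le> kmh * Delta)"

end

theory Submission
  imports Defs
begin

lemma opnorm_bound: "norm (A *v x) \<le> opnorm A * norm x"
  unfolding opnorm_def by (rule onorm) (rule matrix_vector_mul_bounded_linear)

lemma opnorm_nonneg: "0 \<le> opnorm A"
  unfolding opnorm_def by (rule onorm_pos_le) (rule matrix_vector_mul_bounded_linear)

lemma sym_inner:
  fixes A :: "real^'n^'n"
  assumes "transpose A = A"
  shows "u \<bullet> (A *v v) = v \<bullet> (A *v u)"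
proof -
  have "u \<bullet> (A *v v) = (u v* A) \<bullet> v" by (simp add: dot_lmul_matrix)
  also have "u v* A = A *v u" by (metis assms vector_transpose_matrix)
  finally show ?thesis by (simp add: inner_commute)
qed

lemma inner_sym:
  fixes A :: "real^'n^'n"
  assumes "\<And>u v. u \<bullet> (A *v v) = v \<bullet> (A *v u)"
  shows "transpose A = A"
proof -
  have "A $ i $ j = A $ j $ i" for i j
    using assms[of "axis i 1" "axis j 1"]
    by (simp add: inner_axis' matrix_vector_mult_basis column_def)
  then show ?thesis by (simp add: vec_eq_iff transpose_def)
qed

lemma quad_zero:
  fixes a b :: real
  assumes "\<And>t. 0 \<le> 2*t*b + t^2*a"
  shows "b = 0"
proof (rule ccontr)
  assume b: "b \<noteq> 0"
  define e where "e = 1 / (\<bar>a\<bar> + 1)"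
  have e: "e > 0" "e * a \<le> 1" unfolding e_def by (auto simp: field_simps)
  have "2*(-b*e)*b + (-b*e)^2*a = b^2 * e * (e*a - 2)"
    by (simp add: power2_eq_square algebra_simps)
  also have "\<dots> < 0"
    using b e by (intro mult_pos_neg) auto
  finally show False using assms[of "-b*e"] by linarith
qed

lemma rayleigh:
  fixes A :: "real^'n^'n"
  assumes sym: "transpose A = A"
  shows "\<exists>q v. norm v = 1 \<and> A *v v = q *\<^sub>R v \<and> (\<forall>x. q * (norm x)^2 \<le> x \<bullet> (A *v x))"
proof -
  have ne: "sphere (0::real^'n) 1 \<noteq> {}"
  proof -
    obtain i :: 'n where True by blast
    have "axis i (1::real) \<in> sphere 0 1" by (simp add: norm_eq_1 inner_axis_axis)
    then show ?thesis by blast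
  qed
  have cont: "continuous_on (sphere 0 1) (\<lambda>x. x \<bullet> (A *v x))"
    by (intro continuous_intros linear_continuous_on matrix_vector_mul_bounded_linear)
  obtain v where v: "v \<in> sphere 0 1" and vmin: "\<And>y. y \<in> sphere 0 1 \<Longrightarrow> v \<bullet> (A *v v) \<le> y \<bullet> (A *v y)"
    using continuous_attains_inf[OF compact_sphere ne cont] by blast
  define q where "q = v \<bullet> (A *v v)"
  have nv: "norm v = 1" using v by simp
  have vv: "v \<bullet> v = 1" using nv by (simp add: norm_eq_1)
  have allx: "q * (norm x)^2 \<le> x \<bullet> (A *v x)" for x
  proof (cases "x = 0")
    case True then show ?thesis by simp
  next
    case False
    define w where "w = (1 / norm x) *\<^sub>R x"
    have "w \<in> sphere 0 1" using False by (simp add: w_def)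
    then have "q \<le> w \<bullet> (A *v w)" using vmin q_def by blast
    also have "\<dots> = (x \<bullet> (A *v x)) / (norm x)^2"
      by (simp add: w_def matrix_vector_mult_scaleR power2_eq_square)
    finally show ?thesis using False by (simp add: field_simps)
  qed
  have stat: "w \<bullet> (A *v v - q *\<^sub>R v) = 0" for w
  proof -
    define b where "b = w \<bullet> (A *v v - q *\<^sub>R v)"
    define a where "a = w \<bullet> (A *v w) - q * (w \<bullet> w)"
    have "0 \<le> 2*t*b + t^2*a" for t
    proof -
      have "q * (norm (v + t *\<^sub>R w))^2 \<le> (v + t *\<^sub>R w) \<bullet> (A *v (v + t *\<^sub>R w))"
        by (rule allx)
      moreover have "(norm (v + t *\<^sub>R w))^2 = v \<bullet> v + 2 * t * (v \<bullet> w) + t^2 * (w \<bullet> w)"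
        by (simp only: power2_norm_eq_inner) (simp add: inner_add_left inner_add_right inner_commute[of w v] power2_eq_square algebra_simps)
      moreover have "(v + t *\<^sub>R w) \<bullet> (A *v (v + t *\<^sub>R w)) = v \<bullet> (A *v v) + 2 * t * (w \<bullet> (A *v v)) + t^2 * (w \<bullet> (A *v w))"
        using sym_inner[OF sym, of v w]
        by (simp add: matrix_vector_right_distrib matrix_vector_mult_scaleR inner_add_left inner_add_right power2_eq_square algebra_simps)
      ultimately show ?thesis
        unfolding a_def b_def q_def using vv
        by (simp add: inner_diff_right inner_commute[of w v] algebra_simps)
    qed
    then show ?thesis using quad_zero b_def by blast
  qed
  have "A *v v = q *\<^sub>R v"
    using stat[of "A *v v - q *\<^sub>R v"] by simp
  then show ?thesis using nv allx by blast
qed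

lemma lambda_min_props:
  fixes A :: "real^'n^'n"
  assumes sym: "transpose A = A"
  shows "(\<forall>x. lambda_min A * (norm x)^2 \<le> x \<bullet> (A *v x)) \<and> (\<exists>u. u \<noteq> 0 \<and> A *v u = lambda_min A *\<^sub>R u)"
proof -
  obtain q v where nv: "norm v = 1" and Av: "A *v v = q *\<^sub>R v" and allx0: "\<forall>x. q * (norm x)^2 \<le> x \<bullet> (A *v x)"
    using rayleigh[OF sym] by (elim exE conjE)
  have allx: "q * (norm x)^2 \<le> x \<bullet> (A *v x)" for x using allx0 by blast
  define E where "E = {lam. \<exists>v. v \<noteq> 0 \<and> A *v v = lam *\<^sub>R v}"
  have v0: "v \<noteq> 0" using nv by auto
  have qE: "q \<in> E" unfolding E_def using v0 Av by blast
  have lb: "q \<le> lam" if "lam \<in> E" for lam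
  proof -
    have "\<exists>u. u \<noteq> 0 \<and> A *v u = lam *\<^sub>R u" using that by (simp add: E_def)
    then obtain u where u: "u \<noteq> 0" "A *v u = lam *\<^sub>R u" by (elim exE conjE)
    have "q * (norm u)^2 \<le> lam * (norm u)^2"
      using allx[of u] u by (simp add: power2_norm_eq_inner)
    then show ?thesis using u by simp
  qed
  define e where "e lam = (SOME v. v \<noteq> 0 \<and> A *v v = lam *\<^sub>R v)" for lam
  have eprop: "e lam \<noteq> 0 \<and> A *v e lam = lam *\<^sub>R e lam" if "lam \<in> E" for lam
  proof -
    have "\<exists>v. v \<noteq> 0 \<and> A *v v = lam *\<^sub>R v" using that unfolding E_def by simp
    then show ?thesis unfolding e_def by (rule someI_ex)
  qed
  have inj: "inj_on e E"
  proof (rule inj_onI)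
    fix l1 l2 assume l: "l1 \<in> E" "l2 \<in> E" and eq: "e l1 = e l2"
    have "l1 *\<^sub>R e l1 = A *v e l1" using eprop[OF l(1)] by simp
    also have "\<dots> = A *v e l2" using eq by simp
    also have "\<dots> = l2 *\<^sub>R e l2" using eprop[OF l(2)] by simp
    also have "\<dots> = l2 *\<^sub>R e l1" using eq by simp
    finally have "l1 *\<^sub>R e l1 = l2 *\<^sub>R e l1" .
    then show "l1 = l2" using eprop[OF l(1)] by simp
  qed
  have po: "pairwise orthogonal (e ` E)"
  proof (unfold pairwise_def, intro ballI impI)
    fix x y assume "x \<in> e ` E" "y \<in> e ` E" "x \<noteq> y"
    then obtain l1 l2 where l: "l1 \<in> E" "l2 \<in> E" "e l1 \<noteq> e l2" and xy: "x = e l1" "y = e l2" by auto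
    then have ne: "l1 \<noteq> l2" by blast
    have "l1 * (e l1 \<bullet> e l2) = (A *v e l1) \<bullet> e l2" using eprop[OF l(1)] by simp
    also have "\<dots> = e l1 \<bullet> (A *v e l2)" using sym_inner[OF sym, of "e l2" "e l1"] by (simp add: inner_commute)
    also have "\<dots> = l2 * (e l1 \<bullet> e l2)" using eprop[OF l(2)] by simp
    finally have "(l1 - l2) * (e l1 \<bullet> e l2) = 0" by (simp add: algebra_simps)
    then show "orthogonal x y" using ne xy by (simp add: orthogonal_def)
  qed
  have "finite E"
    using finite_imageD[OF pairwise_orthogonal_imp_finite[OF po] inj] .
  then have "Min E = q" by (rule Min_eqI[OF _ lb qE])
  then have "lambda_min A = q"
    unfolding lambda_min_def E_def[symmetric] .
  then show ?thesis using allx Av v0 by auto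
qed

lemma line_deriv:
  fixes f :: "real^'n \<Rightarrow> real" and gradf :: "real^'n \<Rightarrow> real^'n"
  assumes grad: "\<And>y. (f has_derivative (\<lambda>h. gradf y \<bullet> h)) (at y)"
  shows "((\<lambda>s. f (p + s *\<^sub>R a)) has_derivative (\<lambda>h. gradf (p + x *\<^sub>R a) \<bullet> (h *\<^sub>R a))) (at x within S)"
proof -
  have l: "((\<lambda>s. p + s *\<^sub>R a) has_derivative (\<lambda>h. h *\<^sub>R a)) (at x within S)"
    by (auto intro!: derivative_eq_intros)
  show ?thesis using has_derivative_compose[OF l grad] by simp
qed

lemma mixed_diff:
  fixes f :: "real^'n \<Rightarrow> real" and gradf :: "real^'n \<Rightarrow> real^'n"
    and hessf :: "real^'n \<Rightarrow> real^'n^'n"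
  assumes grad: "\<And>y. (f has_derivative (\<lambda>h. gradf y \<bullet> h)) (at y)"
    and hess: "\<And>y. (gradf has_derivative (\<lambda>h. hessf y *v h)) (at y)"
    and t: "t > 0"
  shows "\<exists>z. norm (z - p) \<le> t * (norm a + norm b) \<and>
     f (p + t *\<^sub>R a + t *\<^sub>R b) - f (p + t *\<^sub>R a) - f (p + t *\<^sub>R b) + f p
       = t^2 * (a \<bullet> (hessf z *v b))"
proof -
  define phi where "phi s = f ((p + t *\<^sub>R b) + s *\<^sub>R a) - f (p + s *\<^sub>R a)" for s
  have "\<exists>x\<in>{0<..<t}. phi t - phi 0 = (\<lambda>h. gradf ((p + t *\<^sub>R b) + x *\<^sub>R a) \<bullet> (h *\<^sub>R a) - gradf (p + x *\<^sub>R a) \<bullet> (h *\<^sub>R a)) (t - 0)"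
    unfolding phi_def
    by (rule mvt_simple[OF t]) (intro has_derivative_diff line_deriv[OF grad])
  then obtain xi where xi: "0 < xi" "xi < t"
    and e1: "phi t - phi 0 = t * (gradf ((p + t *\<^sub>R b) + xi *\<^sub>R a) \<bullet> a - gradf (p + xi *\<^sub>R a) \<bullet> a)"
    by (auto simp: algebra_simps)
  define psi where "psi r = gradf ((p + xi *\<^sub>R a) + r *\<^sub>R b) \<bullet> a" for r
  have dpsi: "(psi has_derivative (\<lambda>h. (hessf ((p + xi *\<^sub>R a) + x *\<^sub>R b) *v (h *\<^sub>R b)) \<bullet> a)) (at x within S)" for x S
  proof -
    have l: "((\<lambda>s. (p + xi *\<^sub>R a) + s *\<^sub>R b) has_derivative (\<lambda>h. h *\<^sub>R b)) (at x within S)"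
      by (auto intro!: derivative_eq_intros)
    have "((\<lambda>r. gradf ((p + xi *\<^sub>R a) + r *\<^sub>R b)) has_derivative (\<lambda>h. hessf ((p + xi *\<^sub>R a) + x *\<^sub>R b) *v (h *\<^sub>R b))) (at x within S)"
      using has_derivative_compose[OF l hess] by simp
    then show ?thesis unfolding psi_def
      by (intro has_derivative_inner_left) 
  qed
  have "\<exists>x\<in>{0<..<t}. psi t - psi 0 = (\<lambda>h. (hessf ((p + xi *\<^sub>R a) + x *\<^sub>R b) *v (h *\<^sub>R b)) \<bullet> a) (t - 0)"
    by (rule mvt_simple[OF t]) (rule dpsi)
  then obtain eta where eta: "0 < eta" "eta < t"
    and e2: "psi t - psi 0 = t * ((hessf ((p + xi *\<^sub>R a) + eta *\<^sub>R b) *v b) \<bullet> a)"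
    by (auto simp: algebra_simps matrix_vector_mult_scaleR)
  define z where "z = (p + xi *\<^sub>R a) + eta *\<^sub>R b"
  have "norm (z - p) \<le> norm (xi *\<^sub>R a) + norm (eta *\<^sub>R b)"
    unfolding z_def by (metis add_diff_cancel_left' add.assoc norm_triangle_ineq)
  also have "\<dots> \<le> t * (norm a + norm b)"
    using xi eta by (simp add: distrib_left add_mono mult_right_mono)
  finally have zn: "norm (z - p) \<le> t * (norm a + norm b)" .
  have "f (p + t *\<^sub>R a + t *\<^sub>R b) - f (p + t *\<^sub>R a) - f (p + t *\<^sub>R b) + f p = phi t - phi 0"
    unfolding phi_def by (simp add: algebra_simps)
  also have "\<dots> = t * (psi t - psi 0)"
    unfolding e1 psi_def by (simp add: algebra_simps)
  also have "\<dots> = t^2 * (a \<bullet> (hessf z *v b))"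
    unfolding e2 z_def by (simp add: power2_eq_square inner_commute)
  finally show ?thesis using zn by blast
qed


lemma hess_sym:
  fixes f :: "real^'n \<Rightarrow> real" and gradf :: "real^'n \<Rightarrow> real^'n"
    and hessf :: "real^'n \<Rightarrow> real^'n^'n"
  assumes grad: "\<And>y. (f has_derivative (\<lambda>h. gradf y \<bullet> h)) (at y)"
    and hess: "\<And>y. (gradf has_derivative (\<lambda>h. hessf y *v h)) (at y)"
    and lip: "\<And>y z. opnorm (hessf y - hessf z) \<le> L * norm (y - z)"
  shows "transpose (hessf y) = hessf y"
proof (rule inner_sym)
  fix u v :: "real^'n"
  have L0: "L \<ge> 0"
  proof -
    obtain i :: 'n where True by blast
    have n1: "norm (axis i (1::real)) = 1" by (simp add: norm_eq_1 inner_axis_axis)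
    have "0 \<le> L * norm (axis i (1::real) - 0)"
      using lip[of "axis i 1" 0] opnorm_nonneg[of "hessf (axis i 1) - hessf 0"] by linarith
    then show ?thesis using n1 by (simp add: zero_le_mult_iff)
  qed
  have close: "\<bar>a \<bullet> (hessf z *v b) - a \<bullet> (hessf y *v b)\<bar> \<le> L * norm (z - y) * norm a * norm b" for a b z
  proof -
    have "\<bar>a \<bullet> (hessf z *v b) - a \<bullet> (hessf y *v b)\<bar> = \<bar>a \<bullet> ((hessf z - hessf y) *v b)\<bar>"
      by (simp add: matrix_vector_mult_diff_rdistrib inner_diff_right)
    also have "\<dots> \<le> norm a * norm ((hessf z - hessf y) *v b)"
      by (rule Cauchy_Schwarz_ineq2)
    also have "\<dots> \<le> norm a * (opnorm (hessf z - hessf y) * norm b)"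
      by (intro mult_left_mono opnorm_bound) auto
    also have "\<dots> \<le> norm a * (L * norm (z - y) * norm b)"
      by (intro mult_left_mono mult_right_mono lip) auto
    finally show ?thesis by (simp add: ac_simps)
  qed
  define C where "C = 2 * L * (norm u + norm v) * norm u * norm v"
  have C0: "C \<ge> 0" unfolding C_def using L0 by simp
  have bound: "\<bar>u \<bullet> (hessf y *v v) - v \<bullet> (hessf y *v u)\<bar> \<le> C * t" if t: "t > 0" for t
  proof -
    obtain z1 where z1: "norm (z1 - y) \<le> t * (norm u + norm v)"
      and e1: "f (y + t *\<^sub>R u + t *\<^sub>R v) - f (y + t *\<^sub>R u) - f (y + t *\<^sub>R v) + f y = t^2 * (u \<bullet> (hessf z1 *v v))"
      using mixed_diff[OF grad hess t, of y u v] by blast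
    obtain z2 where z2: "norm (z2 - y) \<le> t * (norm v + norm u)"
      and e2: "f (y + t *\<^sub>R v + t *\<^sub>R u) - f (y + t *\<^sub>R v) - f (y + t *\<^sub>R u) + f y = t^2 * (v \<bullet> (hessf z2 *v u))"
      using mixed_diff[OF grad hess t, of y v u] by blast
    have "f (y + t *\<^sub>R v + t *\<^sub>R u) = f (y + t *\<^sub>R u + t *\<^sub>R v)"
      by (rule arg_cong[where f=f]) (simp add: algebra_simps)
    then have "t^2 * (u \<bullet> (hessf z1 *v v)) = t^2 * (v \<bullet> (hessf z2 *v u))"
      using e1 e2 by linarith
    then have eq: "u \<bullet> (hessf z1 *v v) = v \<bullet> (hessf z2 *v u)" using t by simp
    have c1: "\<bar>u \<bullet> (hessf z1 *v v) - u \<bullet> (hessf y *v v)\<bar> \<le> L * (t * (norm u + norm v)) * norm u * norm v"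
      using close[of u z1 v] z1 L0
      by (meson mult_left_mono mult_right_mono norm_ge_zero order_trans)
    have c2: "\<bar>v \<bullet> (hessf z2 *v u) - v \<bullet> (hessf y *v u)\<bar> \<le> L * (t * (norm u + norm v)) * norm u * norm v"
    proof -
      have "L * norm (z2 - y) * norm v * norm u \<le> L * (t * (norm u + norm v)) * norm v * norm u"
        using z2 L0 by (intro mult_right_mono mult_left_mono) (auto simp: add.commute)
      then show ?thesis using close[of v z2 u] by (simp add: ac_simps)
    qed
    have "\<bar>u \<bullet> (hessf y *v v) - v \<bullet> (hessf y *v u)\<bar> \<le> 2 * (L * (t * (norm u + norm v)) * norm u * norm v)"
      using c1 c2 eq by linarith
    also have "\<dots> = C * t" unfolding C_def by (simp add: ac_simps)
    finally show ?thesis .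
  qed
  show "u \<bullet> (hessf y *v v) = v \<bullet> (hessf y *v u)"
  proof (rule ccontr)
    define d where "d = \<bar>u \<bullet> (hessf y *v v) - v \<bullet> (hessf y *v u)\<bar>"
    assume "u \<bullet> (hessf y *v v) \<noteq> v \<bullet> (hessf y *v u)"
    then have d0: "d > 0" unfolding d_def by simp
    define t where "t = d / (2 * (C + 1))"
    have t0: "t > 0" unfolding t_def using d0 C0 by simp
    have "d \<le> C * t" using bound[OF t0] d_def by simp
    also have "\<dots> < d"
    proof -
      have "C * t = d * (C / (2 * (C + 1)))" unfolding t_def by simp
      also have "\<dots> < d * 1"
        using d0 C0 by (intro mult_strict_left_mono) (auto simp: field_simps)
      finally show ?thesis by simp
    qed
    finally show False by simp
  qed
qed

lemma mono_aux:
  fixes D x m s :: real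
  assumes "0 \<le> D" "x \<le> m" "m * D \<le> s" shows "x * D \<le> s"
  using mult_right_mono[OF assms(2,1)] assms(3) by linarith

lemma div_aux:
  fixes a k D G :: real
  assumes "k > 0" "a / k * D \<le> G" shows "a * D \<le> G * k"
proof -
  have "a / k * D * k \<le> G * k" by (rule mult_right_mono) (use assms in auto)
  moreover have "a / k * D * k = a * D" using assms(1) by simp
  ultimately show ?thesis by simp
qed

lemma succ_cond:
  fixes D ks kmf etaS muc kH Dmax G T nH P A sm :: real
  assumes D: "D > 0" and ks: "ks > 0" and kmf: "kmf > 0" and eS: "0 < etaS" "etaS < 1"
    and muc: "muc > 0" and kH: "kH \<ge> 1" and Dmax: "D \<le> Dmax"
    and G: "G \<ge> 0" and T: "T \<ge> 0" and nH: "nH \<ge> 0" "nH + 1 \<le> kH"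
    and P: "P \<ge> ks * max (G * min D (G / (nH + 1))) (T * D^2)"
    and PA: "\<bar>P - A\<bar> \<le> 2 * kmf * D^3"
    and sm: "sm = max G T"
    and c1: "max (max (2 * kmf * Dmax / (ks * (1 - etaS))) kH) muc * D \<le> sm"
    and c2: "max (2 * kmf / (ks * (1 - etaS))) muc * D \<le> sm"
  shows "A / P \<ge> etaS \<and> muc * D \<le> sm"
proof -
  have om: "1 - etaS > 0" using eS by simp
  have kso: "ks * (1 - etaS) > 0" using ks om by simp
  have smD: "muc * D \<le> sm"
    by (rule mono_aux[of D muc "max (2 * kmf / (ks * (1 - etaS))) muc"]) (use D c2 in auto)
  have key: "2 * kmf * D^3 \<le> (1 - etaS) * P \<and> P > 0"
  proof (cases "T \<le> G")
    case True
    then have smG: "sm = G" using sm by simp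
    have GD: "G \<ge> muc * D" using smD smG by simp
    have Gpos: "G > 0" using GD mult_pos_pos[OF muc D] by linarith
    have "kH * D \<le> G" by (rule mono_aux[of D kH "max (max (2 * kmf * Dmax / (ks * (1 - etaS))) kH) muc"]) (use c1 smG D in auto)
    moreover have "(nH + 1) * D \<le> kH * D" using nH D by simp
    ultimately have "D \<le> G / (nH + 1)" using nH by (simp add: field_simps)
    then have mD: "min D (G / (nH + 1)) = D" by simp
    have "ks * (G * min D (G / (nH + 1))) \<le> ks * max (G * min D (G / (nH + 1))) (T * D^2)"
      by (rule mult_left_mono) (use ks in auto)
    then have P1: "P \<ge> ks * (G * D)" using P mD by simp
    have "2 * kmf * Dmax / (ks * (1 - etaS)) * D \<le> G"
      by (rule mono_aux[of D _ "max (max (2 * kmf * Dmax / (ks * (1 - etaS))) kH) muc"]) (use c1 smG D in auto)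
    then have "2 * kmf * Dmax * D \<le> G * (ks * (1 - etaS))"
      by (rule div_aux[OF kso])
    then have h: "2 * kmf * Dmax * D * D \<le> G * (ks * (1 - etaS)) * D"
      by (rule mult_right_mono) (use D in auto)
    have "2 * kmf * D^3 = 2 * kmf * D * D * D" by (simp add: power3_eq_cube)
    also have "\<dots> \<le> 2 * kmf * Dmax * D * D"
    proof -
      have "(2*kmf*D*D) * D \<le> (2*kmf*D*D) * Dmax" by (rule mult_left_mono) (use Dmax D kmf in auto)
      then show ?thesis by (simp add: ac_simps)
    qed
    also have "\<dots> \<le> (1 - etaS) * (ks * (G * D))" using h by (simp add: ac_simps)
    also have "\<dots> \<le> (1 - etaS) * P" using P1 om by (simp add: mult_left_mono)
    moreover have "ks * (G * D) > 0" using ks Gpos D by simp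
    ultimately show ?thesis using P1 by linarith
  next
    case False
    then have smT: "sm = T" using sm by simp
    have TD: "T \<ge> muc * D" using smD smT by simp
    have Tpos: "T > 0" using TD mult_pos_pos[OF muc D] by linarith
    have "ks * (T * D^2) \<le> ks * max (G * min D (G / (nH + 1))) (T * D^2)"
      by (rule mult_left_mono) (use ks in auto)
    then have P1: "P \<ge> ks * (T * D^2)" using P by simp
    have "2 * kmf / (ks * (1 - etaS)) * D \<le> T"
      by (rule mono_aux[of D _ "max (2 * kmf / (ks * (1 - etaS))) muc"]) (use c2 smT D in auto)
    then have "2 * kmf * D \<le> T * (ks * (1 - etaS))"
      by (rule div_aux[OF kso])
    then have h: "2 * kmf * D * D^2 \<le> T * (ks * (1 - etaS)) * D^2"
      by (rule mult_right_mono) (use D in auto)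
    have "2 * kmf * D^3 = 2 * kmf * D * D^2" by (simp add: power3_eq_cube power2_eq_square)
    also have "\<dots> \<le> (1 - etaS) * (ks * (T * D^2))" using h by (simp add: ac_simps)
    also have "\<dots> \<le> (1 - etaS) * P" using P1 om by (simp add: mult_left_mono)
    moreover have "ks * (T * D^2) > 0" using ks Tpos D by simp
    ultimately show ?thesis using P1 by linarith
  qed
  moreover have "(1 - etaS) * P = P - etaS * P" by (simp add: algebra_simps)
  moreover have "P - A \<le> 2 * kmf * D^3" using PA by (simp add: abs_le_iff)
  ultimately have "etaS * P \<le> A" by linarith
  then have "etaS \<le> A / P" using key by (simp add: pos_le_divide_eq)
  then show ?thesis using smD by simp
qed

lemma decr_bound:
  fixes D Dm e ks kH G T nH P sm :: real
  assumes D: "D \<ge> Dm" and Dm: "Dm > 0" and Dme: "Dm \<le> e / kH" and kH: "kH \<ge> 1"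
    and e: "e > 0" and sme: "sm \<ge> e" and sm: "sm = max G T"
    and G: "G \<ge> 0" and T: "T \<ge> 0" and nH: "nH \<ge> 0" "nH + 1 \<le> kH"
    and P: "P \<ge> ks * max (G * min D (G / (nH + 1))) (T * D^2)" and ks: "ks > 0"
  shows "P \<ge> ks * e * min Dm (Dm^2)"
proof (cases "T \<le> G")
  case True
  then have Ge: "G \<ge> e" using sm sme by simp
  have "G / (nH + 1) \<ge> G / kH" using nH G by (intro divide_left_mono) auto
  moreover have "G / kH \<ge> e / kH" using Ge kH by (simp add: divide_right_mono)
  ultimately have "min D (G / (nH + 1)) \<ge> Dm" using D Dme by linarith
  then have "G * min D (G / (nH + 1)) \<ge> e * Dm" using Ge e Dm by (intro mult_mono) auto
  then have "P \<ge> ks * (e * Dm)" using P ks by (smt (verit) max.cobounded1 mult_left_mono)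
  moreover have "e * Dm \<ge> e * min Dm (Dm^2)" using e by (simp add: mult_left_mono)
  ultimately show ?thesis using ks by (smt (verit) mult.assoc mult_left_mono)
next
  case False
  then have Te: "T \<ge> e" using sm sme by simp
  have "D^2 \<ge> Dm^2" using D Dm by (simp add: power_mono)
  then have "T * D^2 \<ge> e * Dm^2" using Te e by (intro mult_mono) auto
  then have "P \<ge> ks * (e * Dm^2)" using P ks by (smt (verit) max.cobounded2 mult_left_mono)
  moreover have "e * Dm^2 \<ge> e * min Dm (Dm^2)" using e by (simp add: mult_left_mono)
  ultimately show ?thesis using ks by (smt (verit) mult.assoc mult_left_mono)
qed

lemma final_arith:
  fixes a b :: nat and D0 Dm gi gd M d :: real
  assumes D0: "D0 > 0" and Dm: "Dm > 0" and gi: "gi > 1" and gd: "0 < gd" "gd < 1"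
    and d: "d > 0" and Dle: "Dm \<le> D0 * gi ^ a * gd ^ b" and ad: "real a * d \<le> M"
  shows "real (a + b) \<le> ln (D0 / Dm) / ln (1 / gd) + (1 + ln gi / ln (1 / gd)) * (M / d)"
proof -
  define Lg where "Lg = ln (1 / gd)"
  have Lg: "Lg > 0" unfolding Lg_def using gd by simp
  have lgd: "ln gd = - Lg" unfolding Lg_def using gd by (simp add: ln_div)
  have lgi: "ln gi > 0" using gi by simp
  have "ln Dm \<le> ln (D0 * gi ^ a * gd ^ b)" using Dle Dm by simp
  also have "\<dots> = ln D0 + real a * ln gi + real b * ln gd"
    using D0 gi gd by (simp add: ln_mult ln_realpow)
  finally have "real b * Lg \<le> ln (D0 / Dm) + real a * ln gi"
    using lgd D0 Dm by (simp add: ln_div)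
  then have b: "real b \<le> ln (D0 / Dm) / Lg + real a * (ln gi / Lg)"
    using Lg by (simp add: field_simps)
  have a: "real a \<le> M / d" using ad d by (simp add: field_simps)
  have "real (a + b) \<le> ln (D0 / Dm) / Lg + real a * (1 + ln gi / Lg)"
    using b by (simp add: algebra_simps)
  also have "\<dots> \<le> ln (D0 / Dm) / Lg + (M / d) * (1 + ln gi / Lg)"
    using a Lg lgi by (intro add_left_mono mult_right_mono) auto
  finally show ?thesis unfolding Lg_def by (simp add: ac_simps)
qed

lemma sig_le:
  fixes H Hf :: "real^'n^'n" and g gf :: "real^'n"
  assumes "transpose H = H" "transpose Hf = Hf"
    and ga: "norm (g - gf) \<le> a" and hb: "opnorm (H - Hf) \<le> b"
  shows "max (norm gf) (max (- lambda_min Hf) 0) \<le> max (norm g) (max (- lambda_min H) 0) + max a b"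
proof -
  have "norm gf \<le> norm g + norm (g - gf)" by (metis norm_triangle_sub add.commute norm_minus_commute)
  then have n: "norm gf \<le> norm g + a" using ga by simp
  obtain u where u: "u \<noteq> 0" "Hf *v u = lambda_min Hf *\<^sub>R u"
    using lambda_min_props[OF assms(2)] by blast
  have lH: "lambda_min H * (norm u)^2 \<le> u \<bullet> (H *v u)"
    using lambda_min_props[OF assms(1)] by blast
  have "u \<bullet> (H *v u) = u \<bullet> (Hf *v u) + u \<bullet> ((H - Hf) *v u)"
    by (simp add: matrix_vector_mult_diff_rdistrib inner_diff_right)
  also have "u \<bullet> (Hf *v u) = lambda_min Hf * (norm u)^2" using u by (simp add: power2_norm_eq_inner)
  also have "u \<bullet> ((H - Hf) *v u) \<le> b * (norm u)^2"
  proof -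
    have "u \<bullet> ((H - Hf) *v u) \<le> norm u * norm ((H - Hf) *v u)" by (rule norm_cauchy_schwarz)
    also have "\<dots> \<le> norm u * (opnorm (H - Hf) * norm u)" by (intro mult_left_mono opnorm_bound) auto
    also have "\<dots> \<le> norm u * (b * norm u)" by (intro mult_left_mono mult_right_mono hb) auto
    finally show ?thesis by (simp add: power2_eq_square ac_simps)
  qed
  finally have "lambda_min H * (norm u)^2 \<le> (lambda_min Hf + b) * (norm u)^2"
    using lH by (simp add: algebra_simps)
  then have "lambda_min H \<le> lambda_min Hf + b" using u by simp
  then have l: "- lambda_min Hf \<le> - lambda_min H + b" by simp
  have a0: "0 \<le> a" using ga norm_ge_zero order_trans by blast
  have m1: "norm g \<le> max (norm g) (max (- lambda_min H) 0)" by simp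
  have m2: "- lambda_min H \<le> max (norm g) (max (- lambda_min H) 0)" by simp
  have m3: "0 \<le> max (norm g) (max (- lambda_min H) 0)" by simp
  have m4: "a \<le> max a b" "b \<le> max a b" by simp_all
  show ?thesis
    by (intro max.boundedI) (use n l a0 m1 m2 m3 m4 in linarith)+
qed

theorem theorem4p15:
  fixes f :: "real^'n \<Rightarrow> real"
    and gradf :: "real^'n \<Rightarrow> real^'n"
    and hessf :: "real^'n \<Rightarrow> real^'n^'n"
    and flow L :: real
    and x s g :: "nat \<Rightarrow> real^'n"
    and c Delta :: "nat \<Rightarrow> real"
    and H :: "nat \<Rightarrow> real^'n^'n"
    and Delta_max gamma_dec gamma_inc eta_U eta_S mu_c :: real
    and kmf kmg kmh kH ks eps :: real
    and K :: nat
  assumes f_low: "\<And>y. f y \<ge> flow"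
    and grad: "\<And>y. (f has_derivative (\<lambda>h. gradf y \<bullet> h)) (at y)"
    and hess: "\<And>y. (gradf has_derivative (\<lambda>h. hessf y *v h)) (at y)"
    and hess_cont: "continuous_on UNIV hessf"
    and hess_lip: "\<And>y z. opnorm (hessf y - hessf z) \<le> L * norm (y - z)"
    and Delta0: "Delta 0 > 0" and Dmax: "Delta_max \<ge> Delta 0"
    and gdec: "0 < gamma_dec" "gamma_dec < 1" and ginc: "1 < gamma_inc"
    and eta: "0 < eta_U" "eta_U \<le> eta_S" "eta_S < 1"
    and muc: "mu_c > 0"
    and kpos: "kmf > 0" "kmg > 0" "kmh > 0"
    and kH: "kH \<ge> 1"
    and ks: "0 < ks" "ks < 1/2"
    and Hsym: "\<And>k. transpose (H k) = H k"
    and fq: "\<And>k. fully_quadratic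
                 (\<lambda>y. c k + g k \<bullet> (y - x k) + 1/2 * ((y - x k) \<bullet> (H k *v (y - x k))))
                 (\<lambda>y. g k + H k *v (y - x k)) (\<lambda>y. H k)
                 f gradf hessf (x k) (Delta k) kmf kmg kmh"
    and Hbd: "\<And>k. opnorm (H k) \<le> kH - 1"
    and step: "\<And>k. norm (s k) \<le> Delta k"
    and decrease: "\<And>k.
       (let m = (\<lambda>y. c k + g k \<bullet> (y - x k) + 1/2 * ((y - x k) \<bullet> (H k *v (y - x k))))
        in m (x k) - m (x k + s k) \<ge>
           ks * max (norm (g k) * min (Delta k) (norm (g k) / (opnorm (H k) + 1)))
                    (max (- lambda_min (H k)) 0 * (Delta k)^2))"
    and iter: "\<And>k.
       (let m = (\<lambda>y. c k + g k \<bullet> (y - x k) + 1/2 * ((y - x k) \<bullet> (H k *v (y - x k))));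
            rho = (f (x k) - f (x k + s k)) / (m (x k) - m (x k + s k));
            sigm = max (norm (g k)) (max (- lambda_min (H k)) 0)
        in (if rho \<ge> eta_S \<and> sigm \<ge> mu_c * Delta k then
              x (Suc k) = x k + s k \<and> Delta (Suc k) = min (gamma_inc * Delta k) Delta_max
            else if eta_U \<le> rho \<and> rho < eta_S \<and> sigm \<ge> mu_c * Delta k then
              x (Suc k) = x k + s k \<and> Delta (Suc k) = Delta k
            else
              x (Suc k) = x k \<and> Delta (Suc k) = gamma_dec * Delta k))"
    and eps: "eps > 0"
    and crit: "\<And>k. k < K \<Longrightarrow>
       max (norm (gradf (x k))) (max (- lambda_min (hessf (x k))) 0) \<ge> eps"
  shows
    "(let ksig = max (kmg * Delta_max) kmh;
          Dmin = min (min (Delta 0)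
                   (gamma_dec * eps /
                      (max (max (2 * kmf * Delta_max / (ks * (1 - eta_S))) kH) mu_c + ksig)))
                 (min (gamma_dec * eps / (max (2 * kmf / (ks * (1 - eta_S))) mu_c + ksig))
                   (eps / ((1 + ksig / mu_c) * kH)))
      in real K \<le> ln (Delta 0 / Dmin) / ln (1 / gamma_dec)
         + (1 + ln gamma_inc / ln (1 / gamma_dec)) *
           ((1 + ksig / mu_c) * (f (x 0) - flow) /
            (eta_U * ks * min (eps * Dmin) (eps * Dmin ^ 2))))"
proof -
  define mdl where "mdl k y = c k + g k \<bullet> (y - x k) + 1/2 * ((y - x k) \<bullet> (H k *v (y - x k)))" for k y
  define pred where "pred k = mdl k (x k) - mdl k (x k + s k)" for k
  define act where "act k = f (x k) - f (x k + s k)" for k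
  define rho where "rho k = act k / pred k" for k
  define taum where "taum k = max (- lambda_min (H k)) 0" for k
  define sigm where "sigm k = max (norm (g k)) (taum k)" for k
  define sig where "sig k = max (norm (gradf (x k))) (max (- lambda_min (hessf (x k))) 0)" for k
  define succ where "succ k \<longleftrightarrow> eta_U \<le> rho k \<and> mu_c * Delta k \<le> sigm k" for k
  define ksig where "ksig = max (kmg * Delta_max) kmh"
  define c1 where "c1 = max (max (2 * kmf * Delta_max / (ks * (1 - eta_S))) kH) mu_c"
  define c2 where "c2 = max (2 * kmf / (ks * (1 - eta_S))) mu_c"
  define Dmin where "Dmin = min (min (Delta 0) (gamma_dec * eps / (c1 + ksig)))
      (min (gamma_dec * eps / (c2 + ksig)) (eps / ((1 + ksig / mu_c) * kH)))"
  define e' where "e' = eps / (1 + ksig / mu_c)"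
  define dlt where "dlt = eta_U * ks * min (eps * Dmin) (eps * Dmin^2) / (1 + ksig / mu_c)"

  have ksig0: "ksig > 0" unfolding ksig_def using kpos by (simp add: less_max_iff_disj)
  have q0: "1 + ksig / mu_c > 0" using ksig0 muc by (simp add: add_pos_pos)
  have e'0: "e' > 0" unfolding e'_def using eps q0 by simp
  have c1pos: "c1 > 0" unfolding c1_def using muc by (simp add: less_max_iff_disj)
  have c2pos: "c2 > 0" unfolding c2_def using muc by (simp add: less_max_iff_disj)
  have Dmax0: "Delta_max > 0" using Delta0 Dmax by linarith
  have Dmin0: "Dmin > 0"
    unfolding Dmin_def using Delta0 gdec eps c1pos c2pos ksig0 q0 kH by simp
  have DminD0: "Dmin \<le> Delta 0" unfolding Dmin_def by simp
  have Dmin1: "Dmin \<le> gamma_dec * eps / (c1 + ksig)" unfolding Dmin_def by simp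
  have Dmin2: "Dmin \<le> gamma_dec * eps / (c2 + ksig)" unfolding Dmin_def by simp
  have Dmin3: "Dmin \<le> e' / kH" unfolding Dmin_def e'_def by (simp add: divide_divide_eq_left)

  have hsym: "transpose (hessf y) = hessf y" for y
    by (rule hess_sym[OF grad hess hess_lip])

  have dec: "pred k \<ge> ks * max (norm (g k) * min (Delta k) (norm (g k) / (opnorm (H k) + 1))) (taum k * (Delta k)^2)" for k
    using decrease[of k] unfolding Let_def pred_def mdl_def taum_def .

  have upd: "(succ k \<and> x (Suc k) = x k + s k \<and> (Delta (Suc k) = min (gamma_inc * Delta k) Delta_max \<or> Delta (Suc k) = Delta k))
     \<or> (\<not> succ k \<and> x (Suc k) = x k \<and> Delta (Suc k) = gamma_dec * Delta k)" for k
  proof -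
    have it: "if rho k \<ge> eta_S \<and> sigm k \<ge> mu_c * Delta k then
              x (Suc k) = x k + s k \<and> Delta (Suc k) = min (gamma_inc * Delta k) Delta_max
            else if eta_U \<le> rho k \<and> rho k < eta_S \<and> sigm k \<ge> mu_c * Delta k then
              x (Suc k) = x k + s k \<and> Delta (Suc k) = Delta k
            else
              x (Suc k) = x k \<and> Delta (Suc k) = gamma_dec * Delta k"
      using iter[of k] unfolding Let_def rho_def act_def pred_def mdl_def sigm_def taum_def .
    show ?thesis
    proof (cases "rho k \<ge> eta_S \<and> sigm k \<ge> mu_c * Delta k")
      case True
      then show ?thesis using it eta unfolding succ_def by auto
    next
      case F1: False
      show ?thesis
      proof (cases "eta_U \<le> rho k \<and> rho k < eta_S \<and> sigm k \<ge> mu_c * Delta k")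
        case True
        then show ?thesis using it F1 unfolding succ_def by auto
      next
        case False
        then show ?thesis using it F1 unfolding succ_def by auto
      qed
    qed
  qed

  have pos: "0 < Delta k \<and> Delta k \<le> Delta_max" for k
  proof (induction k)
    case 0
    then show ?case using Delta0 Dmax by simp
  next
    case (Suc k)
    have "gamma_inc * Delta k > 0" using Suc ginc by simp
    moreover have "gamma_dec * Delta k \<le> Delta_max"
    proof -
      have "gamma_dec * Delta k \<le> 1 * Delta k" by (rule mult_right_mono) (use Suc gdec in auto)
      then show ?thesis using Suc by linarith
    qed
    moreover have "gamma_dec * Delta k > 0" using Suc gdec by simp
    ultimately show ?case using upd[of k] Suc Dmax0 by auto
  qed

  have trans_s: "x (Suc k) = x k + s k \<and> Delta k \<le> Delta (Suc k) \<and> Delta (Suc k) \<le> gamma_inc * Delta k"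
    if "succ k" for k
  proof -
    have p: "0 < Delta k" "Delta k \<le> Delta_max" using pos[of k] by auto
    have "Delta k \<le> gamma_inc * Delta k" using p ginc by simp
    then show ?thesis using upd[of k] that p by auto
  qed
  have trans_u: "x (Suc k) = x k \<and> Delta (Suc k) = gamma_dec * Delta k" if "\<not> succ k" for k
    using upd[of k] that by auto

  have fqk: "\<forall>y \<in> cball (x k) (Delta k).
        \<bar>mdl k y - f y\<bar> \<le> kmf * Delta k ^ 3 \<and>
        norm ((g k + H k *v (y - x k)) - gradf y) \<le> kmg * Delta k ^ 2 \<and>
        opnorm (H k - hessf y) \<le> kmh * Delta k" for k
    using fq[of k] unfolding fully_quadratic_def mdl_def .
  have xin: "x k \<in> cball (x k) (Delta k)" "x k + s k \<in> cball (x k) (Delta k)" for k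
    using pos[of k] step[of k] by (auto simp: dist_norm)

  have PA: "\<bar>pred k - act k\<bar> \<le> 2 * kmf * Delta k ^ 3" for k
  proof -
    have a1: "\<bar>mdl k (x k) - f (x k)\<bar> \<le> kmf * Delta k ^ 3" using fqk[of k] xin(1)[of k] by blast
    have a2: "\<bar>mdl k (x k + s k) - f (x k + s k)\<bar> \<le> kmf * Delta k ^ 3" using fqk[of k] xin(2)[of k] by blast
    have "pred k - act k = (mdl k (x k) - f (x k)) - (mdl k (x k + s k) - f (x k + s k))"
      unfolding pred_def act_def by simp
    then show ?thesis using a1 a2 by (simp add: abs_le_iff)
  qed

  have sigle: "sig k \<le> sigm k + ksig * Delta k" for k
  proof -
    have p: "0 < Delta k" "Delta k \<le> Delta_max" using pos[of k] by auto
    have g0: "norm ((g k + H k *v (x k - x k)) - gradf (x k)) \<le> kmg * Delta k ^ 2"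
      using fqk[of k] xin(1)[of k] by blast
    then have g1: "norm (g k - gradf (x k)) \<le> kmg * Delta k ^ 2" by simp
    have h1: "opnorm (H k - hessf (x k)) \<le> kmh * Delta k" using fqk[of k] xin(1)[of k] by blast
    have "kmg * Delta k ^ 2 = (kmg * Delta k) * Delta k" by (simp add: power2_eq_square)
    also have "\<dots> \<le> (kmg * Delta_max) * Delta k"
      using p kpos by (intro mult_right_mono mult_left_mono) auto
    also have "\<dots> \<le> ksig * Delta k" unfolding ksig_def using p by (intro mult_right_mono) auto
    finally have g2: "norm (g k - gradf (x k)) \<le> ksig * Delta k" using g1 by linarith
    have "kmh * Delta k \<le> ksig * Delta k" unfolding ksig_def using p by (intro mult_right_mono) auto
    then have h2: "opnorm (H k - hessf (x k)) \<le> ksig * Delta k" using h1 by linarith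
    show ?thesis
      using sig_le[OF Hsym[of k] hsym[of "x k"] g2 h2] unfolding sig_def sigm_def taum_def by simp
  qed

  have succ_if: "succ k" if k: "k < K" and d1: "Delta k \<le> eps / (c1 + ksig)" and d2: "Delta k \<le> eps / (c2 + ksig)" for k
  proof -
    have p: "0 < Delta k" "Delta k \<le> Delta_max" using pos[of k] by auto
    have es: "eps \<le> sigm k + ksig * Delta k" using crit[OF k] sigle[of k] unfolding sig_def by linarith
    have "Delta k * (c1 + ksig) \<le> eps" using d1 c1pos ksig0 by (simp add: pos_le_divide_eq)
    then have C1: "c1 * Delta k \<le> sigm k" using es by (simp add: algebra_simps)
    have "Delta k * (c2 + ksig) \<le> eps" using d2 c2pos ksig0 by (simp add: pos_le_divide_eq)
    then have C2: "c2 * Delta k \<le> sigm k" using es by (simp add: algebra_simps)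
    have nH: "opnorm (H k) + 1 \<le> kH" using Hbd[of k] by simp
    have r: "act k / pred k \<ge> eta_S \<and> mu_c * Delta k \<le> sigm k"
      by (rule succ_cond[OF p(1) ks(1) kpos(1) _ eta(3) muc kH p(2) norm_ge_zero _ opnorm_nonneg nH dec PA sigm_def])
        (use eta taum_def C1 C2 c1_def c2_def in auto)
    then show ?thesis unfolding succ_def rho_def using eta by auto
  qed

  have Dlow: "n \<le> K \<Longrightarrow> Dmin \<le> Delta n" for n
  proof (induction n)
    case 0
    then show ?case using DminD0 by simp
  next
    case (Suc n)
    then have nK: "n < K" by simp
    have IH: "Dmin \<le> Delta n" using Suc by simp
    show ?case
    proof (cases "succ n")
      case True
      then show ?thesis using trans_s[of n] IH by auto
    next
      case False
      have D: "Delta (Suc n) = gamma_dec * Delta n" using trans_u[OF False] by simp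
      have "\<not> (Delta n \<le> eps / (c1 + ksig) \<and> Delta n \<le> eps / (c2 + ksig))"
        using succ_if[OF nK] False by blast
      then consider "Delta n > eps / (c1 + ksig)" | "Delta n > eps / (c2 + ksig)" by linarith
      then show ?thesis
      proof cases
        case 1
        have "gamma_dec * (eps / (c1 + ksig)) \<le> gamma_dec * Delta n"
          using 1 gdec by (intro mult_left_mono) auto
        then show ?thesis using D Dmin1 by simp
      next
        case 2
        have "gamma_dec * (eps / (c2 + ksig)) \<le> gamma_dec * Delta n"
          using 2 gdec by (intro mult_left_mono) auto
        then show ?thesis using D Dmin2 by simp
      qed
    qed
  qed

  have dlt_eq: "dlt = eta_U * (ks * e' * min Dmin (Dmin^2))"
  proof -
    have "min (eps * Dmin) (eps * Dmin^2) = eps * min Dmin (Dmin^2)"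
      using eps by (simp add: min_mult_distrib_left)
    then show ?thesis unfolding dlt_def e'_def by (simp add: field_simps)
  qed
  have dlt0: "dlt > 0" unfolding dlt_eq using eta ks e'0 Dmin0 by simp

  have fdec: "f (x k) - f (x (Suc k)) \<ge> dlt" if k: "k < K" and sk: "succ k" for k
  proof -
    have p: "0 < Delta k" "Delta k \<le> Delta_max" using pos[of k] by auto
    have sm: "mu_c * Delta k \<le> sigm k" "eta_U \<le> rho k" using sk unfolding succ_def by auto
    have "ksig * Delta k \<le> ksig * (sigm k / mu_c)"
      using sm muc ksig0 by (intro mult_left_mono) (auto simp: pos_le_divide_eq mult.commute)
    moreover have "eps \<le> sig k" using crit[OF k] unfolding sig_def .
    moreover have "sigm k * (1 + ksig / mu_c) = sigm k + ksig * (sigm k / mu_c)" by (simp add: algebra_simps)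
    ultimately have "eps \<le> sigm k * (1 + ksig / mu_c)" using sigle[of k] by linarith
    then have se: "sigm k \<ge> e'" unfolding e'_def using q0 by (simp add: pos_divide_le_eq)
    have DD: "Dmin \<le> Delta k" using Dlow k by simp
    have nH: "opnorm (H k) + 1 \<le> kH" using Hbd[of k] by simp
    have pb: "pred k \<ge> ks * e' * min Dmin (Dmin^2)"
      by (rule decr_bound[OF DD Dmin0 Dmin3 kH e'0 se sigm_def norm_ge_zero _ opnorm_nonneg nH dec ks(1)])
        (simp add: taum_def)
    have pp: "pred k > 0" using pb ks e'0 Dmin0 by (smt (verit) min_less_iff_conj mult_pos_pos zero_less_power)
    have "eta_U * pred k \<le> act k" using sm(2) pp unfolding rho_def by (simp add: pos_le_divide_eq)
    moreover have "eta_U * (ks * e' * min Dmin (Dmin^2)) \<le> eta_U * pred k"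
      using pb eta by (intro mult_left_mono) auto
    moreover have "act k = f (x k) - f (x (Suc k))" unfolding act_def using trans_s[OF sk] by simp
    ultimately show ?thesis unfolding dlt_eq by linarith
  qed

  define I where "I k = (if succ k then 1 else 0 :: nat)" for k
  define na where "na n = (\<Sum>k<n. I k)" for n
  define nb where "nb n = (\<Sum>k<n. 1 - I k)" for n
  have ab: "na n + nb n = n" for n
  proof (induction n)
    case 0 then show ?case by (simp add: na_def nb_def)
  next
    case (Suc n)
    have "I n \<le> 1" by (simp add: I_def)
    then show ?case using Suc by (simp add: na_def nb_def)
  qed
  have fsum: "n \<le> K \<Longrightarrow> real (na n) * dlt \<le> f (x 0) - f (x n)" for n
  proof (induction n)
    case 0 then show ?case by (simp add: na_def)
  next
    case (Suc n)
    then have nK: "n < K" and IH: "real (na n) * dlt \<le> f (x 0) - f (x n)" by auto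
    show ?case
    proof (cases "succ n")
      case True
      then have "na (Suc n) = na n + 1" by (simp add: na_def I_def)
      then show ?thesis using IH fdec[OF nK True] by (simp add: algebra_simps)
    next
      case False
      then have "na (Suc n) = na n" by (simp add: na_def I_def)
      then show ?thesis using IH trans_u[OF False] by simp
    qed
  qed
  have Dsum: "Delta n \<le> Delta 0 * gamma_inc ^ na n * gamma_dec ^ nb n" for n
  proof (induction n)
    case 0 then show ?case by (simp add: na_def nb_def)
  next
    case (Suc n)
    show ?case
    proof (cases "succ n")
      case True
      then have e: "na (Suc n) = na n + 1" "nb (Suc n) = nb n" by (simp_all add: na_def nb_def I_def)
      have "Delta (Suc n) \<le> gamma_inc * Delta n" using trans_s[OF True] by simp
      also have "\<dots> \<le> gamma_inc * (Delta 0 * gamma_inc ^ na n * gamma_dec ^ nb n)"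
        using Suc ginc by (intro mult_left_mono) auto
      finally show ?thesis using e by (simp add: ac_simps)
    next
      case False
      then have e: "na (Suc n) = na n" "nb (Suc n) = nb n + 1" by (simp_all add: na_def nb_def I_def)
      have "Delta (Suc n) = gamma_dec * Delta n" using trans_u[OF False] by simp
      also have "\<dots> \<le> gamma_dec * (Delta 0 * gamma_inc ^ na n * gamma_dec ^ nb n)"
        using Suc gdec by (intro mult_left_mono) auto
      finally show ?thesis using e by (simp add: ac_simps)
    qed
  qed

  have M: "real (na K) * dlt \<le> f (x 0) - flow" using fsum[of K] f_low[of "x K"] by simp
  have DK: "Dmin \<le> Delta 0 * gamma_inc ^ na K * gamma_dec ^ nb K" using Dlow[of K] Dsum[of K] by simp
  have fin: "real (na K + nb K) \<le> ln (Delta 0 / Dmin) / ln (1 / gamma_dec)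
      + (1 + ln gamma_inc / ln (1 / gamma_dec)) * ((f (x 0) - flow) / dlt)"
    by (rule final_arith[OF Delta0 Dmin0 ginc gdec dlt0 DK M])
  have "(f (x 0) - flow) / dlt = (1 + ksig / mu_c) * (f (x 0) - flow) / (eta_U * ks * min (eps * Dmin) (eps * Dmin ^ 2))"
    unfolding dlt_def by (simp add: field_simps)
  then have main: "real K \<le> ln (Delta 0 / Dmin) / ln (1 / gamma_dec)
         + (1 + ln gamma_inc / ln (1 / gamma_dec)) *
           ((1 + ksig / mu_c) * (f (x 0) - flow) /
            (eta_U * ks * min (eps * Dmin) (eps * Dmin ^ 2)))"
    using fin ab[of K] by simp
  show ?thesis
    using main unfolding Let_def Dmin_def c1_def c2_def ksig_def .
qed

end
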